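(* Let $p(\cdot)\in\mathcal{P}(\mathbb{R}^n)$, $1\le q,\alpha\le\infty$, with $p(x)\le\alpha\le q$ for all $x$. Then for every $r>0$, $$r^{\frac n\alpha-N_{r,p}}\Big\|\big\{\|f\chi_{Q_{r,k}}\|_{L^{p(\cdot)}}\big\}_{k\in\mathbb{Z}^n}\Big\|_{\ell^{q}}\sim\Big\|\,r^{\frac n\alpha-\frac n{p(\cdot)}-\frac nq}\|f\chi_{B(\cdot,r)}\|_{L^{p(\cdot)}}\Big\|_{L^{q}},$$ where the positive equivalence constants are independent of $f$.
   Context: $\mathcal{P}(\mathbb{R}^n)$: measurable $p(\cdot):\mathbb{R}^n\to[1,\infty)$ with $p_-=\operatorname{ess\,inf}p>1$, $p^+=\operatorname{ess\,sup}p<\infty$. $\|\cdot\|_{L^{p(\cdot)}}$ is the Luxemburg norm. $Q_{r,k}=r(k+[0,1)^n)$ for $k\in\mathbb{Z}^n$; $N_{r,p}=n/p_-$ if $r>1$ and $N_{r,p}=n/p^+$ if $r\le1$. On the right, the $L^q$ norm is in the variable $x$ of $x\mapsto r^{n/\alpha-n/p(x)-n/q}\|f\chi_{B(x,r)}\|_{L^{p(\cdot)}}$, with $B(x,r)$ the open ball. *)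

theory Defs
  imports "HOL-Analysis.Analysis"
begin

definition epow :: "ennreal \<Rightarrow> real \<Rightarrow> ennreal" where
  "epow x a = (if x = \<infinity> then \<infinity> else ennreal (enn2real x powr a))"

definition einv :: "ennreal \<Rightarrow> real" where
  "einv q = (if q = \<infinity> then 0 else 1 / enn2real q)"

definition p_minus :: "(real^'n \<Rightarrow> real) \<Rightarrow> real" where
  "p_minus p = Sup {a. AE x in lebesgue. a \<le> p x}"

definition p_plus :: "(real^'n \<Rightarrow> real) \<Rightarrow> real" where
  "p_plus p = Inf {a. AE x in lebesgue. p x \<le> a}"

definition var_exp :: "(real^'n \<Rightarrow> real) \<Rightarrow> bool" where
  "var_exp p \<longleftrightarrow> p \<in> borel_measurable lebesgue \<and> (\<forall>x. 1 \<le> p x)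
     \<and> 1 < p_minus p \<and> (\<exists>M. AE x in lebesgue. p x \<le> M)"

text \<open>Luxemburg norm of L^{p(.)} (value infinity if f is not in the space).\<close>
definition lux_norm :: "(real^'n \<Rightarrow> real) \<Rightarrow> (real^'n \<Rightarrow> real) \<Rightarrow> ennreal" where
  "lux_norm p f = (INF t\<in>{t::real. 0 < t \<and>
      (\<integral>\<^sup>+ x. ennreal (\<bar>f x / t\<bar> powr p x) \<partial>lebesgue) \<le> 1}. ennreal t)"

definition N_rp :: "real \<Rightarrow> (real^'n \<Rightarrow> real) \<Rightarrow> real" where
  "N_rp r p = (if r > 1 then real CARD('n) / p_minus p else real CARD('n) / p_plus p)"

definition cube :: "real \<Rightarrow> int^'n \<Rightarrow> (real^'n) set" where
  "cube r k = {x. \<forall>i. r * of_int (k$i) \<le> x$i \<and> x$i < r * (of_int (k$i) + 1)}"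

definition lq_seq_norm :: "ennreal \<Rightarrow> (int^'n \<Rightarrow> ennreal) \<Rightarrow> ennreal" where
  "lq_seq_norm q a = (if q = \<infinity> then (SUP k. a k)
     else epow (\<integral>\<^sup>+ k. epow (a k) (enn2real q) \<partial>count_space UNIV) (1 / enn2real q))"

definition Lq_norm :: "ennreal \<Rightarrow> (real^'n \<Rightarrow> ennreal) \<Rightarrow> ennreal" where
  "Lq_norm q g = (if q = \<infinity> then Inf {z. AE x in lebesgue. g x \<le> z}
     else epow (\<integral>\<^sup>+ x. epow (g x) (enn2real q) \<partial>lebesgue) (1 / enn2real q))"

end

theory Submission
  imports Defs
begin

definition kap :: "real \<Rightarrow> real^'n \<Rightarrow> int^'n" where
  "kap r x = (\<chi> i. \<lfloor>x$i / r\<rfloor>)"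

lemma mem_cube_kap:
  assumes "0 < r" shows "x \<in> cube r k \<longleftrightarrow> k = kap r x"
proof -
  have "(r * of_int (k$i) \<le> x$i \<and> x$i < r * (of_int (k$i) + 1)) \<longleftrightarrow> k$i = \<lfloor>x$i / r\<rfloor>" for i
  proof -
    have "k$i = \<lfloor>x$i / r\<rfloor> \<longleftrightarrow> of_int (k$i) \<le> x$i / r \<and> x$i / r < of_int (k$i) + 1"
      by (metis floor_eq_iff)
    also have "\<dots> \<longleftrightarrow> r * of_int (k$i) \<le> x$i \<and> x$i < r * (of_int (k$i) + 1)"
      using assms by (simp add: le_divide_eq divide_less_eq mult.commute)
    finally show ?thesis by simp
  qed
  then show ?thesis unfolding cube_def kap_def by (auto simp: vec_eq_iff)
qed

lemma cube_borel: "cube r k \<in> sets borel"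
proof -
  have "cube r k = (\<Inter>i. {x. r * of_int (k$i) \<le> x$i} \<inter> {x. x$i < r * (of_int (k$i) + 1)})"
    unfolding cube_def by auto
  also have "\<dots> \<in> sets borel"
    by (intro sets.countable_INT' sets.Int borel_closed borel_open closed_halfspace_component_ge_cart open_halfspace_component_lt_cart) auto
  finally show ?thesis .
qed

lemma cube_sets[measurable]: "cube r k \<in> sets lebesgue"
  using cube_borel by (metis sets_lborel sets_completionI_sets)

lemma emeasure_cube:
  fixes k :: "int^'n::finite"
  assumes "0 < r" shows "emeasure lebesgue (cube r k) = ennreal (r ^ CARD('n))"
proof -
  define l :: "real^'n" where "l = (\<chi> i. r * of_int (k$i))"
  define u :: "real^'n" where "u = (\<chi> i. r * (of_int (k$i) + 1))"
  have sub1: "box l u \<subseteq> cube r k" and sub2: "cube r k \<subseteq> cbox l u"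
    by (auto simp: l_def u_def cube_def mem_box_cart less_imp_le)
  have pr: "(\<Prod>b\<in>Basis. (u - l) \<bullet> b) = r ^ CARD('n)"
  proof -
    have "(\<Prod>b\<in>Basis. (u - l) \<bullet> b) = (\<Prod>b\<in>(Basis::(real^'n) set). r)"
      by (rule prod.cong) (auto simp: Basis_vec_def inner_axis l_def u_def algebra_simps)
    also have "\<dots> = r ^ CARD('n)" by simp
    finally show ?thesis .
  qed
  have le: "\<forall>b\<in>Basis. l \<bullet> b \<le> u \<bullet> b"
    using assms by (auto simp: Basis_vec_def inner_axis l_def u_def)
  have "emeasure lebesgue (box l u) = ennreal (r ^ CARD('n))"
    using le pr by (simp add: emeasure_lborel_box_eq)
  moreover have "emeasure lebesgue (cbox l u) = ennreal (r ^ CARD('n))"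
    using le pr by (simp add: emeasure_lborel_cbox_eq)
  ultimately show ?thesis
    using emeasure_mono[OF sub1, of lebesgue] emeasure_mono[OF sub2, of lebesgue]
    by (simp add: antisym)
qed

lemma int_kappa_gen:
  fixes \<phi> :: "int^'n::finite \<Rightarrow> ennreal" and P :: "int^'n \<Rightarrow> (real^'n) set"
  assumes r: "0 < r" and Ps: "\<And>k. P k \<in> sets lebesgue" and Psub: "\<And>k. P k \<subseteq> cube r k"
  shows "(\<integral>\<^sup>+x. indicator (P (kap r x)) x * \<phi> (kap r x) \<partial>lebesgue)
       = (\<integral>\<^sup>+k. \<phi> k * emeasure lebesgue (P k) \<partial>count_space UNIV)"
proof -
  have pt: "(\<integral>\<^sup>+k. indicator (P k) x * \<phi> k \<partial>count_space UNIV) = indicator (P (kap r x)) x * \<phi> (kap r x)" for x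
  proof -
    have "(\<integral>\<^sup>+k. indicator (P k) x * \<phi> k \<partial>count_space UNIV)
        = (\<integral>\<^sup>+k. (indicator (P k) x * \<phi> k) * indicator {kap r x} k \<partial>count_space UNIV)"
    proof (rule nn_integral_cong)
      fix k
      show "indicator (P k) x * \<phi> k = (indicator (P k) x * \<phi> k) * indicator {kap r x} k"
        using Psub[of k] mem_cube_kap[OF r, of x k] by (auto split: split_indicator)
    qed
    also have "\<dots> = indicator (P (kap r x)) x * \<phi> (kap r x)"
      by simp
    finally show ?thesis .
  qed
  have "(\<integral>\<^sup>+x. indicator (P (kap r x)) x * \<phi> (kap r x) \<partial>lebesgue)
      = (\<integral>\<^sup>+x. (\<integral>\<^sup>+k. indicator (P k) x * \<phi> k \<partial>count_space UNIV) \<partial>lebesgue)"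
    by (simp add: pt)
  also have "\<dots> = (\<integral>\<^sup>+k. (\<integral>\<^sup>+x. indicator (P k) x * \<phi> k \<partial>lebesgue) \<partial>count_space UNIV)"
    by (rule nn_integral_count_space_nn_integral) (auto intro!: borel_measurable_times_ennreal borel_measurable_indicator Ps)
  also have "\<dots> = (\<integral>\<^sup>+k. \<phi> k * emeasure lebesgue (P k) \<partial>count_space UNIV)"
  proof (rule nn_integral_cong)
    fix k
    have "(\<integral>\<^sup>+x. indicator (P k) x * \<phi> k \<partial>lebesgue) = (\<integral>\<^sup>+x. \<phi> k * indicator (P k) x \<partial>lebesgue)"
      by (simp add: mult.commute)
    also have "\<dots> = \<phi> k * emeasure lebesgue (P k)"
      by (rule nn_integral_cmult_indicator[OF Ps])
    finally show "(\<integral>\<^sup>+x. indicator (P k) x * \<phi> k \<partial>lebesgue) = \<phi> k * emeasure lebesgue (P k)" .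
  qed
  finally show ?thesis .
qed

lemma int_kappa:
  fixes \<phi> :: "int^'n::finite \<Rightarrow> ennreal"
  assumes r: "0 < r"
  shows "(\<integral>\<^sup>+x. \<phi> (kap r x) \<partial>lebesgue) = ennreal (r ^ CARD('n)) * (\<integral>\<^sup>+k. \<phi> k \<partial>count_space UNIV)"
proof -
  have "(\<integral>\<^sup>+x. \<phi> (kap r x) \<partial>lebesgue) = (\<integral>\<^sup>+x. indicator (cube r (kap r x)) x * \<phi> (kap r x) \<partial>lebesgue)"
    using mem_cube_kap[OF r] by (intro nn_integral_cong) (auto split: split_indicator)
  also have "\<dots> = (\<integral>\<^sup>+k. \<phi> k * emeasure lebesgue (cube r k) \<partial>count_space UNIV)"
    by (rule int_kappa_gen[OF r]) auto
  also have "\<dots> = (\<integral>\<^sup>+k. ennreal (r ^ CARD('n)) * \<phi> k \<partial>count_space UNIV)"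
    by (simp add: emeasure_cube[OF r] mult.commute)
  also have "\<dots> = ennreal (r ^ CARD('n)) * (\<integral>\<^sup>+k. \<phi> k \<partial>count_space UNIV)"
    by (rule nn_integral_cmult) simp
  finally show ?thesis .
qed

lemma lux_le_rho:
  assumes "0 < t" "(\<integral>\<^sup>+ x. ennreal (\<bar>g x / t\<bar> powr p x) \<partial>lebesgue) \<le> 1"
  shows "lux_norm p g \<le> ennreal t"
  unfolding lux_norm_def using assms by (auto intro!: INF_lower2)

lemma lux_less_rho:
  assumes "lux_norm p g < ennreal t" "\<And>x. 0 \<le> p x"
  shows "0 < t \<and> (\<integral>\<^sup>+ x. ennreal (\<bar>g x / t\<bar> powr p x) \<partial>lebesgue) \<le> 1"
proof -
  from assms(1) obtain s where s: "0 < s" "(\<integral>\<^sup>+ x. ennreal (\<bar>g x / s\<bar> powr p x) \<partial>lebesgue) \<le> 1"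
    "ennreal s < ennreal t"
    unfolding lux_norm_def by (auto simp: INF_less_iff)
  have st: "s < t" using s(3) by (metis ennreal_leI not_le)
  have "(\<integral>\<^sup>+ x. ennreal (\<bar>g x / t\<bar> powr p x) \<partial>lebesgue) \<le> (\<integral>\<^sup>+ x. ennreal (\<bar>g x / s\<bar> powr p x) \<partial>lebesgue)"
  proof (rule nn_integral_mono)
    fix x
    have "\<bar>g x / t\<bar> \<le> \<bar>g x / s\<bar>" using s(1) st
      by (simp add: abs_div frac_le)
    then show "ennreal (\<bar>g x / t\<bar> powr p x) \<le> ennreal (\<bar>g x / s\<bar> powr p x)"
      using assms(2) by (intro ennreal_leI powr_mono2) auto
  qed
  then show ?thesis using s st by auto
qed

lemma lux_cover:
  fixes p f :: "real^'n::finite \<Rightarrow> real" and B :: "'i \<Rightarrow> (real^'n) set"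
  assumes pm: "p \<in> borel_measurable lebesgue" and p1: "\<And>x. 1 \<le> p x"
    and fm: "f \<in> borel_measurable lebesgue"
    and fin: "finite I" "I \<noteq> {}" and Bs: "\<And>i. i \<in> I \<Longrightarrow> B i \<in> sets lebesgue"
    and cov: "A \<subseteq> (\<Union>i\<in>I. B i)"
    and bnd: "\<And>i. i \<in> I \<Longrightarrow> lux_norm p (\<lambda>x. f x * indicator (B i) x) \<le> c"
  shows "lux_norm p (\<lambda>x. f x * indicator A x) \<le> ennreal (real (card I)) * c"
proof (cases "c = top")
  case True
  have "card I > 0" using fin by auto
  then show ?thesis using True by (simp add: ennreal_mult_top)
next
  case False
  then obtain c0 where c0: "c = ennreal c0" "0 \<le> c0" by (cases c) auto
  define N where "N = real (card I)"
  have N1: "1 \<le> N" using fin by (simp add: N_def Suc_leI card_gt_0_iff)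
  have key: "lux_norm p (\<lambda>x. f x * indicator A x) \<le> ennreal (N * t)" if t: "c0 < t" for t
  proof -
    have t0: "0 < t" using t c0 by linarith
    have ti: "(\<integral>\<^sup>+ x. ennreal (\<bar>f x * indicator (B i) x / t\<bar> powr p x) \<partial>lebesgue) \<le> 1" if "i \<in> I" for i
    proof -
      have "lux_norm p (\<lambda>x. f x * indicator (B i) x) < ennreal t"
        using bnd[OF that] c0 t t0 by (metis ennreal_lessI order.strict_trans1)
      from lux_less_rho[OF this] p1 show ?thesis by (meson order.trans zero_le_one)
    qed
    have pt: "ennreal (\<bar>f x * indicator A x / (N * t)\<bar> powr p x)
        \<le> ennreal (1 / N) * (\<Sum>i\<in>I. ennreal (\<bar>f x * indicator (B i) x / t\<bar> powr p x))" for x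
    proof (cases "x \<in> A")
      case False then show ?thesis by simp
    next
      case True
      then obtain i0 where i0: "i0 \<in> I" "x \<in> B i0" using cov by auto
      have "\<bar>f x / (N * t)\<bar> powr p x = (1 / N) powr p x * \<bar>f x / t\<bar> powr p x"
      proof -
        have "\<bar>f x / (N * t)\<bar> = (1 / N) * \<bar>f x / t\<bar>" using N1 t0 by (simp add: abs_div abs_mult)
        then show ?thesis using N1 by (metis powr_mult abs_ge_zero divide_nonneg_nonneg zero_le_one order.trans)
      qed
      also have "\<dots> \<le> (1 / N) * \<bar>f x / t\<bar> powr p x"
      proof (rule mult_right_mono)
        have "(1 / N) powr p x \<le> (1 / N) powr 1"
          using N1 p1[of x] by (intro powr_mono') auto
        then show "(1 / N) powr p x \<le> 1 / N" using N1 by simp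
      qed simp
      finally have pw: "\<bar>f x / (N * t)\<bar> powr p x \<le> 1 / N * \<bar>f x / t\<bar> powr p x" .
      have "ennreal (\<bar>f x * indicator A x / (N * t)\<bar> powr p x)
           \<le> ennreal (1 / N) * ennreal (\<bar>f x * indicator (B i0) x / t\<bar> powr p x)"
      proof -
        have "ennreal (\<bar>f x * indicator A x / (N * t)\<bar> powr p x) \<le> ennreal (1 / N * (\<bar>f x * indicator (B i0) x / t\<bar> powr p x))"
          using True i0 pw by (intro ennreal_leI) simp
        also have "\<dots> = ennreal (1 / N) * ennreal (\<bar>f x * indicator (B i0) x / t\<bar> powr p x)"
          by (rule ennreal_mult'') simp
        finally show ?thesis .
      qed
      also have "\<dots> \<le> ennreal (1 / N) * (\<Sum>i\<in>I. ennreal (\<bar>f x * indicator (B i) x / t\<bar> powr p x))"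
        by (intro mult_left_mono member_le_sum i0 fin) auto
      finally show ?thesis .
    qed
    have "(\<integral>\<^sup>+ x. ennreal (\<bar>f x * indicator A x / (N * t)\<bar> powr p x) \<partial>lebesgue)
        \<le> (\<integral>\<^sup>+ x. ennreal (1 / N) * (\<Sum>i\<in>I. ennreal (\<bar>f x * indicator (B i) x / t\<bar> powr p x)) \<partial>lebesgue)"
      by (rule nn_integral_mono) (rule pt)
    also have "\<dots> = ennreal (1 / N) * (\<Sum>i\<in>I. (\<integral>\<^sup>+ x. ennreal (\<bar>f x * indicator (B i) x / t\<bar> powr p x) \<partial>lebesgue))"
      using Bs pm fm
      by (subst nn_integral_cmult, measurable, subst nn_integral_sum, measurable)
    also have "\<dots> \<le> ennreal (1 / N) * (\<Sum>i\<in>I. 1)"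
      by (intro mult_left_mono sum_mono ti) auto
    also have "(\<Sum>i\<in>I. (1::ennreal)) = ennreal N" by (simp add: N_def ennreal_of_nat_eq_real_of_nat)
    also have "ennreal (1 / N) * ennreal N = 1"
    proof -
      have "ennreal (1 / N) * ennreal N = ennreal (1 / N * N)" using N1 by (intro ennreal_mult''[symmetric]) auto
      also have "1 / N * N = 1" using N1 by simp
      finally show ?thesis by simp
    qed
    finally show ?thesis using N1 t0 by (intro lux_le_rho) auto
  qed
  have "lux_norm p (\<lambda>x. f x * indicator A x) \<le> ennreal (N * c0)"
  proof (rule ennreal_le_epsilon)
    fix e :: real assume e: "0 < e"
    have "lux_norm p (\<lambda>x. f x * indicator A x) \<le> ennreal (N * (c0 + e / N))"
      using N1 e by (intro key) auto
    also have "N * (c0 + e / N) = N * c0 + e" using N1 by (simp add: field_simps)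
    finally show "lux_norm p (\<lambda>x. f x * indicator A x) \<le> ennreal (N * c0) + ennreal e"
      using N1 c0 e by (metis ennreal_plus less_imp_le mult_nonneg_nonneg order.trans zero_le_one)
  qed
  also have "ennreal (N * c0) = ennreal N * ennreal c0" using c0(2) by (rule ennreal_mult'')
  finally show ?thesis using c0 by (simp add: N_def)
qed

lemma finite_intbox: "finite {d::int^'n::finite. \<forall>i. d$i \<in> {a..b}}"
proof -
  have "{d::int^'n. \<forall>i. d$i \<in> {a..b}} \<subseteq> vec_lambda ` (PiE UNIV (\<lambda>_. {a..b}))"
  proof
    fix d :: "int^'n" assume "d \<in> {d. \<forall>i. d$i \<in> {a..b}}"
    then have "vec_nth d \<in> PiE UNIV (\<lambda>_. {a..b})" by auto
    then show "d \<in> vec_lambda ` (PiE UNIV (\<lambda>_. {a..b}))" by (metis image_eqI vec_nth_inverse)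
  qed
  moreover have "finite (vec_lambda ` (PiE UNIV (\<lambda>_. {a..b::int}) :: ('n \<Rightarrow> int) set))"
    by (intro finite_imageI finite_PiE) auto
  ultimately show ?thesis by (rule finite_subset)
qed

lemma ball_cover:
  fixes x :: "real^'n::finite"
  assumes r: "0 < r"
  shows "ball x r \<subseteq> (\<Union>d\<in>{d::int^'n. \<forall>i. d$i \<in> {-1..1}}. cube r (kap r x + d))"
proof
  fix y assume y: "y \<in> ball x r"
  have "kap r y - kap r x \<in> {d::int^'n. \<forall>i. d$i \<in> {-1..1}}"
  proof (safe)
    fix i
    have "\<bar>y$i - x$i\<bar> < r"
      using y component_le_norm_cart[of "y - x" i] by (simp add: dist_norm norm_minus_commute)
    then have a: "y$i / r < x$i / r + 1" and b: "x$i / r < y$i / r + 1"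
      using r by (auto simp: field_simps)
    have "\<lfloor>y$i / r\<rfloor> \<le> \<lfloor>x$i / r + 1\<rfloor>"
      using a by (intro floor_mono) simp
    moreover have "\<lfloor>x$i / r\<rfloor> \<le> \<lfloor>y$i / r + 1\<rfloor>"
      using b by (intro floor_mono) simp
    ultimately have "\<lfloor>y$i / r\<rfloor> \<le> \<lfloor>x$i / r\<rfloor> + 1" "\<lfloor>x$i / r\<rfloor> \<le> \<lfloor>y$i / r\<rfloor> + 1"
      by simp_all
    then show "(kap r y - kap r x) $ i \<in> {-1..1}" by (simp add: kap_def)
  qed
  moreover have "y \<in> cube r (kap r x + (kap r y - kap r x))"
    using mem_cube_kap[OF r, of y "kap r y"] by simp
  ultimately show "y \<in> (\<Union>d\<in>{d::int^'n. \<forall>i. d$i \<in> {-1..1}}. cube r (kap r x + d))" by blast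
qed

lemma cube_in_ball:
  fixes x :: "real^'n::finite"
  assumes r: "0 < r" and x: "x \<in> cube (r / (real CARD('n) + 1)) j"
  shows "cube (r / (real CARD('n) + 1)) j \<subseteq> ball x r"
proof
  define s where "s = r / (real CARD('n) + 1)"
  have s0: "0 < s" using r by (simp add: s_def)
  fix y assume y: "y \<in> cube (r / (real CARD('n) + 1)) j"
  have comp: "\<bar>(x - y)$i\<bar> < s" for i
  proof -
    have hx: "s * of_int (j$i) \<le> x$i \<and> x$i < s * of_int (j$i) + s"
      using x unfolding cube_def s_def[symmetric] by (auto simp: distrib_left)
    have hy: "s * of_int (j$i) \<le> y$i \<and> y$i < s * of_int (j$i) + s"
      using y unfolding cube_def s_def[symmetric] by (auto simp: distrib_left)
    show ?thesis using hx hy unfolding abs_less_iff by simp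
  qed
  have "dist x y \<le> (\<Sum>i\<in>UNIV. \<bar>(x - y)$i\<bar>)"
    unfolding dist_norm by (rule norm_le_l1_cart)
  also have "\<dots> < (\<Sum>i\<in>(UNIV::'n set). s)"
    using comp by (intro sum_strict_mono) auto
  also have "\<dots> = CARD('n) * s" by simp
  also have "\<dots> < r" using r by (simp add: s_def field_simps)
  finally show "y \<in> ball x r" by simp
qed

definition fidx :: "nat \<Rightarrow> int^'n \<Rightarrow> int^'n \<Rightarrow> int^'n" where
  "fidx m k e = (\<chi> i. int m * k$i + e$i)"

lemma fine_sub:
  assumes r: "0 < r" and m: "0 < m" and e: "\<forall>i. e$i \<in> {0..int m - 1}"
  shows "cube (r / m) (fidx m k e) \<subseteq> cube r k"
proof
  fix y assume y: "y \<in> cube (r / m) (fidx m k e)"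
  show "y \<in> cube r k" unfolding cube_def
  proof (safe)
    fix i
    have y1: "r / m * of_int (int m * k$i + e$i) \<le> y$i" and y2: "y$i < r / m * (of_int (int m * k$i + e$i) + 1)"
      using y by (auto simp: cube_def fidx_def)
    have ei: "e$i \<in> {0..int m - 1}" using e by blast
    have e0: "0 \<le> e$i" and e1: "e$i + 1 \<le> int m" using ei by auto
    have "r * of_int (k$i) \<le> r / m * of_int (int m * k$i + e$i)"
      using r m e0 by (simp add: field_simps)
    then show "r * of_int (k$i) \<le> y$i" using y1 by linarith
    have "r / m * (of_int (int m * k$i + e$i) + 1) \<le> r * (of_int (k$i) + 1)"
    proof -
      have "real_of_int (e$i) + 1 \<le> real m" using e1 by linarith
      then have "r / m * (real_of_int (e$i) + 1) \<le> r / m * m" using r m by (intro mult_left_mono) auto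
      then show ?thesis using r m by (simp add: field_simps)
    qed
    then show "y$i < r * (of_int (k$i) + 1)" using y2 by linarith
  qed
qed

lemma fine_cover:
  assumes r: "0 < r" and m: "0 < m"
  shows "cube r k \<subseteq> (\<Union>e\<in>{e::int^'n. \<forall>i. e$i \<in> {0..int m - 1}}. cube (r / m) (fidx m k e))"
proof
  fix y assume y: "y \<in> cube r k"
  define e where "e = kap (r / m) y - (\<chi> i. int m * k$i)"
  have rm: "0 < r / m" using r m by simp
  have "e$i \<in> {0..int m - 1}" for i
  proof -
    have "r * of_int (k$i) \<le> y$i" "y$i < r * (of_int (k$i) + 1)" using y by (auto simp: cube_def)
    moreover have "of_int (int m * k$i) * (r / m) = r * of_int (k$i)" using m by simp
    moreover have "of_int (int m * k$i + int m) * (r / m) = r * (of_int (k$i) + 1)" using m by (simp add: field_simps)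
    ultimately have a': "of_int (int m * k$i) * (r / m) \<le> y$i" and b': "y$i < of_int (int m * k$i + int m) * (r / m)"
      by simp_all
    have a: "of_int (int m * k$i) \<le> y$i / (r / m)" using a' by (subst pos_le_divide_eq[OF rm])
    have b: "y$i / (r / m) < of_int (int m * k$i + int m)" using b' by (subst pos_divide_less_eq[OF rm])
    have "int m * k$i \<le> \<lfloor>y$i / (r / m)\<rfloor>" using a by (simp add: le_floor_iff)
    moreover have "\<lfloor>y$i / (r / m)\<rfloor> < int m * k$i + int m" using b by (simp add: floor_less_iff)
    ultimately show ?thesis by (simp add: e_def kap_def)
  qed
  moreover have "fidx m k e = kap (r / m) y" by (simp add: fidx_def e_def vec_eq_iff)
  then have "y \<in> cube (r / m) (fidx m k e)" using mem_cube_kap[OF rm, of y "kap (r/m) y"] by simp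
  ultimately show "y \<in> (\<Union>e\<in>{e::int^'n. \<forall>i. e$i \<in> {0..int m - 1}}. cube (r / m) (fidx m k e))" by blast
qed

lemma epow_mono: "x \<le> y \<Longrightarrow> 0 \<le> a \<Longrightarrow> epow x a \<le> epow y a"
proof (cases "y = top")
  case True then show ?thesis by (simp add: epow_def)
next
  case False
  assume xy: "x \<le> y" and a: "0 \<le> a"
  then have "x \<noteq> top" using False by (metis top.extremum_unique)
  then show ?thesis using False xy a
    by (auto simp: epow_def top.not_eq_extremum intro!: ennreal_leI powr_mono2 enn2real_mono)
qed

lemma epow_cmult:
  assumes d: "0 < d" shows "epow (ennreal d * x) a = ennreal (d powr a) * epow x a"
proof (cases "x = top")
  case True
  have "ennreal d * top = top" using d by (simp add: ennreal_mult_top)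
  moreover have "ennreal (d powr a) * top = top" using d by (simp add: ennreal_mult_top)
  ultimately show ?thesis using True by (simp add: epow_def)
next
  case False
  then obtain x0 where x0: "x = ennreal x0" "0 \<le> x0" by (cases x) auto
  have "ennreal d * x = ennreal (d * x0)" using x0 d by (simp add: ennreal_mult)
  then have "epow (ennreal d * x) a = ennreal ((d * x0) powr a)" using d x0 by (simp add: epow_def)
  also have "\<dots> = ennreal (d powr a * x0 powr a)" using d x0 by (simp add: powr_mult)
  also have "\<dots> = ennreal (d powr a) * ennreal (x0 powr a)" by (rule ennreal_mult) auto
  finally show ?thesis using x0 by (simp add: epow_def)
qed

lemma shift_sum:
  fixes \<psi> :: "int^'n::finite \<Rightarrow> ennreal"
  shows "(\<integral>\<^sup>+k. \<psi> (k + d) \<partial>count_space UNIV) = (\<integral>\<^sup>+k. \<psi> k \<partial>count_space UNIV)"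
proof -
  have "bij_betw (\<lambda>k. k + d) UNIV UNIV"
    by (rule bij_betwI[where g="\<lambda>k. k - d"]) auto
  then show ?thesis by (rule nn_integral_bij_count_space)
qed

lemma dir1_fin:
  fixes a :: "int^'n::finite \<Rightarrow> ennreal" and G :: "real^'n \<Rightarrow> ennreal" and w :: "real^'n \<Rightarrow> real"
  assumes r: "0 < r" and qq: "1 \<le> qq" and D: "finite D" "D \<noteq> {}"
    and w: "\<And>x. 0 \<le> w x" "\<And>x. w x \<le> w1" and w1: "0 < w1" and M1: "0 < M1"
    and HA: "\<And>x. G x \<le> ennreal M1 * Max ((\<lambda>d. a (kap r x + d)) ` D)"
  shows "(\<integral>\<^sup>+x. epow (ennreal (w x) * G x) qq \<partial>lebesgue)
     \<le> ennreal ((w1 * M1) powr qq * r ^ CARD('n) * card D) * (\<integral>\<^sup>+k. epow (a k) qq \<partial>count_space UNIV)"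
proof -
  define c1 where "c1 = (w1 * M1) powr qq"
  have c1: "0 < c1" using w1 M1 by (simp add: c1_def)
  define \<phi> where "\<phi> k = ennreal c1 * (\<Sum>d\<in>D. epow (a (k + d)) qq)" for k
  have pt: "epow (ennreal (w x) * G x) qq \<le> \<phi> (kap r x)" for x
  proof -
    define Mx where "Mx = Max ((\<lambda>d. a (kap r x + d)) ` D)"
    have "ennreal (w x) * G x \<le> ennreal w1 * (ennreal M1 * Mx)"
      using HA[of x] w[of x] unfolding Mx_def by (intro mult_mono) (auto intro: ennreal_leI)
    also have "\<dots> = ennreal (w1 * M1) * Mx" using w1 M1 by (simp add: ennreal_mult mult.assoc)
    finally have "epow (ennreal (w x) * G x) qq \<le> epow (ennreal (w1 * M1) * Mx) qq"
      using qq by (intro epow_mono) auto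
    also have "\<dots> = ennreal c1 * epow Mx qq" unfolding c1_def using w1 M1 by (intro epow_cmult) auto
    also have "epow Mx qq \<le> (\<Sum>d\<in>D. epow (a (kap r x + d)) qq)"
    proof -
      have "Mx \<in> (\<lambda>d. a (kap r x + d)) ` D" unfolding Mx_def using D by (intro Max_in) auto
      then obtain d0 where d0: "d0 \<in> D" "Mx = a (kap r x + d0)" by auto
      then show ?thesis using D by (auto intro!: member_le_sum)
    qed
    finally show ?thesis unfolding \<phi>_def by (simp add: mult_left_mono)
  qed
  have "(\<integral>\<^sup>+x. epow (ennreal (w x) * G x) qq \<partial>lebesgue) \<le> (\<integral>\<^sup>+x. \<phi> (kap r x) \<partial>lebesgue)"
    by (rule nn_integral_mono) (rule pt)
  also have "\<dots> = ennreal (r ^ CARD('n)) * (\<integral>\<^sup>+k. \<phi> k \<partial>count_space UNIV)"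
    by (rule int_kappa[OF r])
  also have "(\<integral>\<^sup>+k. \<phi> k \<partial>count_space UNIV) = ennreal c1 * (\<Sum>d\<in>D. (\<integral>\<^sup>+k. epow (a (k + d)) qq \<partial>count_space UNIV))"
    unfolding \<phi>_def by (subst nn_integral_cmult) (auto simp: nn_integral_sum)
  also have "(\<Sum>d\<in>D. (\<integral>\<^sup>+k. epow (a (k + d)) qq \<partial>count_space UNIV)) = of_nat (card D) * (\<integral>\<^sup>+k. epow (a k) qq \<partial>count_space UNIV)"
    by (simp add: shift_sum[of "\<lambda>k. epow (a k) qq"])
  also have "ennreal (r ^ CARD('n)) * (ennreal c1 * (of_nat (card D) * (\<integral>\<^sup>+k. epow (a k) qq \<partial>count_space UNIV)))
      = ennreal (c1 * r ^ CARD('n) * card D) * (\<integral>\<^sup>+k. epow (a k) qq \<partial>count_space UNIV)"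
    using c1 r by (simp add: ennreal_mult ennreal_of_nat_eq_real_of_nat mult_ac)
  finally show ?thesis by (simp add: c1_def)
qed

lemma dir2_fin:
  fixes a :: "int^'n::finite \<Rightarrow> ennreal" and G :: "real^'n \<Rightarrow> ennreal" and w :: "real^'n \<Rightarrow> real"
    and P :: "int^'n \<Rightarrow> (real^'n) set"
  assumes r: "0 < r" and qq: "1 \<le> qq" and s: "0 < s"
    and Psub: "\<And>k. P k \<subseteq> cube r k" and Ps: "\<And>k. P k \<in> sets lebesgue"
    and Pm: "\<And>k. emeasure lebesgue (P k) = ennreal (s ^ CARD('n))"
    and HB: "\<And>k x. x \<in> P k \<Longrightarrow> a k \<le> ennreal M2 * G x"
    and M2: "0 < M2" and w: "\<And>x. w0 \<le> w x" and w0: "0 < w0"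
  shows "(\<integral>\<^sup>+k. epow (a k) qq \<partial>count_space UNIV)
     \<le> ennreal ((M2 / w0) powr qq / s ^ CARD('n)) * (\<integral>\<^sup>+x. epow (ennreal (w x) * G x) qq \<partial>lebesgue)"
proof -
  define c2 where "c2 = (M2 / w0) powr qq"
  have c2: "0 < c2" using w0 M2 by (simp add: c2_def)
  define S where "S = (\<integral>\<^sup>+k. epow (a k) qq \<partial>count_space UNIV)"
  define T where "T = (\<integral>\<^sup>+x. epow (ennreal (w x) * G x) qq \<partial>lebesgue)"
  have ak: "epow (a k) qq \<le> ennreal c2 * epow (ennreal (w x) * G x) qq" if x: "x \<in> P k" for k x
  proof -
    have "a k \<le> ennreal M2 * G x" by (rule HB[OF x])
    also have "\<dots> \<le> ennreal ((M2 / w0) * w x) * G x"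
    proof (rule mult_right_mono)
      have "M2 \<le> (M2 / w0) * w x" using w[of x] w0 M2 by (simp add: field_simps)
      then show "ennreal M2 \<le> ennreal ((M2 / w0) * w x)" by (rule ennreal_leI)
    qed simp
    also have "\<dots> = ennreal (M2 / w0) * (ennreal (w x) * G x)"
    proof -
      have "ennreal ((M2 / w0) * w x) = ennreal (M2 / w0) * ennreal (w x)"
        using w0 M2 w[of x] by (intro ennreal_mult) auto
      then show ?thesis by (simp add: mult.assoc)
    qed
    finally have "epow (a k) qq \<le> epow (ennreal (M2 / w0) * (ennreal (w x) * G x)) qq"
      using qq by (intro epow_mono) auto
    also have "\<dots> = ennreal c2 * epow (ennreal (w x) * G x) qq"
      unfolding c2_def using w0 M2 by (intro epow_cmult) auto
    finally show ?thesis .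
  qed
  define h where "h x = indicator (P (kap r x)) x * (ennreal (1 / c2) * epow (a (kap r x)) qq)" for x
  have hle: "h x \<le> epow (ennreal (w x) * G x) qq" for x
  proof (cases "x \<in> P (kap r x)")
    case True
    have "ennreal (1 / c2) * epow (a (kap r x)) qq \<le> ennreal (1 / c2) * (ennreal c2 * epow (ennreal (w x) * G x) qq)"
      by (intro mult_left_mono ak[OF True]) auto
    also have "\<dots> = (ennreal (1 / c2) * ennreal c2) * epow (ennreal (w x) * G x) qq" by (simp add: mult.assoc)
    also have "ennreal (1 / c2) * ennreal c2 = 1"
    proof -
      have "ennreal (1 / c2) * ennreal c2 = ennreal (1 / c2 * c2)" using c2 by (intro ennreal_mult''[symmetric]) auto
      then show ?thesis using c2 by simp
    qed
    finally show ?thesis using True by (simp add: h_def)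
  qed (simp add: h_def)
  have "(\<integral>\<^sup>+x. h x \<partial>lebesgue) = (\<integral>\<^sup>+k. (ennreal (1 / c2) * epow (a k) qq) * emeasure lebesgue (P k) \<partial>count_space UNIV)"
    unfolding h_def by (rule int_kappa_gen[where \<phi>="\<lambda>k. ennreal (1 / c2) * epow (a k) qq", OF r Ps Psub])
  also have "\<dots> = (\<integral>\<^sup>+k. ennreal (s ^ CARD('n) / c2) * epow (a k) qq \<partial>count_space UNIV)"
  proof (rule nn_integral_cong)
    fix k
    have "ennreal (1 / c2) * ennreal (s ^ CARD('n)) = ennreal (1 / c2 * s ^ CARD('n))"
      using c2 s by (intro ennreal_mult''[symmetric]) auto
    then have "ennreal (1 / c2) * ennreal (s ^ CARD('n)) = ennreal (s ^ CARD('n) / c2)" by simp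
    note eq = this
    have "ennreal (1 / c2) * epow (a k) qq * emeasure lebesgue (P k) = (ennreal (1 / c2) * ennreal (s ^ CARD('n))) * epow (a k) qq"
      unfolding Pm by (simp only: ac_simps)
    also have "\<dots> = ennreal (s ^ CARD('n) / c2) * epow (a k) qq" by (simp only: eq)
    finally show "ennreal (1 / c2) * epow (a k) qq * emeasure lebesgue (P k) = ennreal (s ^ CARD('n) / c2) * epow (a k) qq" .
  qed
  also have "\<dots> = ennreal (s ^ CARD('n) / c2) * S" unfolding S_def by (rule nn_integral_cmult) simp
  moreover have "(\<integral>\<^sup>+x. h x \<partial>lebesgue) \<le> T"
    unfolding T_def by (rule nn_integral_mono) (rule hle)
  ultimately have hS: "ennreal (s ^ CARD('n) / c2) * S \<le> T" by simp
  have e1: "ennreal (c2 / s ^ CARD('n)) * ennreal (s ^ CARD('n) / c2) = 1"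
  proof -
    have "ennreal (c2 / s ^ CARD('n)) * ennreal (s ^ CARD('n) / c2) = ennreal (c2 / s ^ CARD('n) * (s ^ CARD('n) / c2))"
      using c2 s by (intro ennreal_mult''[symmetric]) auto
    also have "c2 / s ^ CARD('n) * (s ^ CARD('n) / c2) = 1" using c2 s by simp
    finally show ?thesis by simp
  qed
  have "S = 1 * S" by simp
  also have "\<dots> = ennreal (c2 / s ^ CARD('n)) * (ennreal (s ^ CARD('n) / c2) * S)"
    by (simp only: e1[symmetric] mult.assoc)
  also have "\<dots> \<le> ennreal (c2 / s ^ CARD('n)) * T" by (intro mult_left_mono hS) auto
  finally show ?thesis unfolding S_def T_def c2_def .
qed

lemma ennreal_inv_cancel: "0 < c \<Longrightarrow> ennreal c * ennreal (1 / c) = 1"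
proof -
  assume c: "0 < c"
  have "ennreal c * ennreal (1 / c) = ennreal (c * (1 / c))" using c by (intro ennreal_mult[symmetric]) auto
  then show ?thesis using c by simp
qed

lemma AE_pos_ex:
  assumes "AE x in M. Q x" "A \<in> sets M" "emeasure M A \<noteq> 0"
  shows "\<exists>x\<in>A. Q x"
proof (rule ccontr)
  assume nx: "\<not> (\<exists>x\<in>A. Q x)"
  from assms(1) obtain N where N: "{x \<in> space M. \<not> Q x} \<subseteq> N" "emeasure M N = 0" "N \<in> sets M" by (rule AE_E)
  have "A \<subseteq> N" using nx N(1) sets.sets_into_space[OF assms(2)] by auto
  then have "emeasure M A \<le> emeasure M N" using N(3) by (rule emeasure_mono)
  then show False using N(2) assms(3) by simp
qed

lemma dir1_inf:
  fixes a :: "int^'n::finite \<Rightarrow> ennreal" and G :: "real^'n \<Rightarrow> ennreal" and w :: "real^'n \<Rightarrow> real"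
  assumes D: "finite D" "D \<noteq> {}"
    and w: "\<And>x. 0 \<le> w x" "\<And>x. w x \<le> w1" and w1: "0 < w1" and M1: "0 < M1"
    and HA: "\<And>x. G x \<le> ennreal M1 * Max ((\<lambda>d. a (kap r x + d)) ` D)"
  shows "Inf {z. AE x in lebesgue. ennreal (w x) * G x \<le> z} \<le> ennreal (w1 * M1) * (SUP k. a k)"
proof (rule Inf_lower, safe, intro AE_I2)
  fix x
  define Mx where "Mx = Max ((\<lambda>d. a (kap r x + d)) ` D)"
  have "ennreal (w x) * G x \<le> ennreal w1 * (ennreal M1 * Mx)"
    using HA[of x] w[of x] unfolding Mx_def by (intro mult_mono) (auto intro: ennreal_leI)
  also have "\<dots> = ennreal (w1 * M1) * Mx" using w1 M1 by (simp add: ennreal_mult mult.assoc)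
  also have "Mx \<le> (SUP k. a k)"
  proof -
    have "Mx \<in> (\<lambda>d. a (kap r x + d)) ` D" unfolding Mx_def using D by (intro Max_in) auto
    then show ?thesis by (auto intro: SUP_upper)
  qed
  finally show "ennreal (w x) * G x \<le> ennreal (w1 * M1) * (SUP k. a k)" by (simp add: mult_left_mono)
qed

lemma dir2_inf:
  fixes a :: "int^'n::finite \<Rightarrow> ennreal" and G :: "real^'n \<Rightarrow> ennreal" and w :: "real^'n \<Rightarrow> real"
    and P :: "int^'n \<Rightarrow> (real^'n) set"
  assumes s: "0 < s" and Ps: "\<And>k. P k \<in> sets lebesgue"
    and Pm: "\<And>k. emeasure lebesgue (P k) = ennreal (s ^ CARD('n))"
    and HB: "\<And>k x. x \<in> P k \<Longrightarrow> a k \<le> ennreal M2 * G x"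
    and M2: "0 < M2" and w: "\<And>x. w0 \<le> w x" and w0: "0 < w0"
  shows "(SUP k. a k) \<le> ennreal (M2 / w0) * Inf {z. AE x in lebesgue. ennreal (w x) * G x \<le> z}"
proof (rule SUP_least)
  fix k
  define Z where "Z = {z. AE x in lebesgue. ennreal (w x) * G x \<le> z}"
  have "ennreal (1 / (M2 / w0)) * a k \<le> Inf Z"
  proof (rule Inf_greatest)
    fix z assume "z \<in> Z"
    then have ae: "AE x in lebesgue. ennreal (w x) * G x \<le> z" by (simp add: Z_def)
    have "emeasure lebesgue (P k) \<noteq> 0" using s by (simp add: Pm)
    then obtain x where x: "x \<in> P k" "ennreal (w x) * G x \<le> z" using AE_pos_ex[OF ae Ps] by blast
    have "a k \<le> ennreal M2 * G x" by (rule HB[OF x(1)])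
    also have "\<dots> \<le> ennreal ((M2 / w0) * w x) * G x"
    proof (rule mult_right_mono)
      have "M2 \<le> (M2 / w0) * w x" using w[of x] w0 M2 by (simp add: field_simps)
      then show "ennreal M2 \<le> ennreal ((M2 / w0) * w x)" by (rule ennreal_leI)
    qed simp
    also have "\<dots> = ennreal (M2 / w0) * (ennreal (w x) * G x)"
    proof -
      have "ennreal ((M2 / w0) * w x) = ennreal (M2 / w0) * ennreal (w x)"
        using w0 M2 w[of x] by (intro ennreal_mult) auto
      then show ?thesis by (simp add: mult.assoc)
    qed
    also have "\<dots> \<le> ennreal (M2 / w0) * z" by (intro mult_left_mono x(2)) auto
    finally have "ennreal (1 / (M2 / w0)) * a k \<le> ennreal (1 / (M2 / w0)) * (ennreal (M2 / w0) * z)"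
      by (intro mult_left_mono) auto
    also have "\<dots> = (ennreal (M2 / w0) * ennreal (1 / (M2 / w0))) * z" by (simp only: ac_simps)
    also have "\<dots> = z" using M2 w0 by (simp only: ennreal_inv_cancel divide_pos_pos mult_1)
    finally show "ennreal (1 / (M2 / w0)) * a k \<le> z" .
  qed
  then have "ennreal (M2 / w0) * (ennreal (1 / (M2 / w0)) * a k) \<le> ennreal (M2 / w0) * Inf Z"
    by (intro mult_left_mono) auto
  moreover have "ennreal (M2 / w0) * (ennreal (1 / (M2 / w0)) * a k) = a k"
  proof -
    have "ennreal (M2 / w0) * (ennreal (1 / (M2 / w0)) * a k) = (ennreal (M2 / w0) * ennreal (1 / (M2 / w0))) * a k"
      by (simp only: ac_simps)
    also have "\<dots> = a k" using M2 w0 by (simp only: ennreal_inv_cancel divide_pos_pos mult_1)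
    finally show ?thesis .
  qed
  ultimately show "a k \<le> ennreal (M2 / w0) * Inf {z. AE x in lebesgue. ennreal (w x) * G x \<le> z}"
    by (simp add: Z_def)
qed

lemma combine:
  assumes "0 < K" "0 < c1" "0 < c2" "B \<le> ennreal c1 * A" "A \<le> ennreal c2 * B"
  shows "ennreal (K / c1) * B \<le> ennreal K * A \<and> ennreal K * A \<le> ennreal (K * c2) * B"
proof
  have "ennreal (K / c1) * B \<le> ennreal (K / c1) * (ennreal c1 * A)" using assms(4) by (intro mult_left_mono) auto
  also have "\<dots> = ennreal (K / c1 * c1) * A"
  proof -
    have "ennreal (K / c1 * c1) = ennreal (K / c1) * ennreal c1" using assms by (intro ennreal_mult) auto
    then show ?thesis by (simp only: mult.assoc)
  qed
  also have "K / c1 * c1 = K" using assms by simp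
  finally show "ennreal (K / c1) * B \<le> ennreal K * A" .
  have "ennreal K * A \<le> ennreal K * (ennreal c2 * B)" using assms(5) by (intro mult_left_mono) auto
  also have "\<dots> = ennreal (K * c2) * B" using assms by (simp add: ennreal_mult mult.assoc)
  finally show "ennreal K * A \<le> ennreal (K * c2) * B" .
qed

lemma ball_sets: "ball (x::real^'n::finite) r \<in> sets lebesgue"
  using borel_open[OF open_ball[of x r]] by (metis sets_lborel sets_completionI_sets)

lemma weight_bounds:
  fixes r u E0 :: real
  assumes r: "0 < r" and u: "0 < u" "u \<le> n"
  shows "r powr E0 * min 1 (r powr (- n)) \<le> r powr (E0 - u)"
    and "r powr (E0 - u) \<le> r powr E0 * max 1 (r powr (- n))"
proof -
  have eq: "r powr (E0 - u) = r powr E0 * r powr (- u)" by (simp add: powr_add[symmetric])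
  have "min 1 (r powr (- n)) \<le> r powr (- u) \<and> r powr (- u) \<le> max 1 (r powr (- n))"
  proof (cases "1 \<le> r")
    case True
    have "r powr (- n) \<le> r powr (- u)" using True u by (intro powr_mono) auto
    moreover have "r powr (- u) \<le> r powr 0" using True u by (intro powr_mono) auto
    ultimately show ?thesis using r by auto
  next
    case False
    have "r powr (- u) \<le> r powr (- n)" using False u r by (intro powr_mono') auto
    moreover have "r powr 0 \<le> r powr (- u)" using False u r by (intro powr_mono') auto
    ultimately show ?thesis using r by auto
  qed
  then show "r powr E0 * min 1 (r powr (- n)) \<le> r powr (E0 - u)"
    and "r powr (E0 - u) \<le> r powr E0 * max 1 (r powr (- n))"
    unfolding eq using r by (auto intro: mult_left_mono)
qed

theorem lemma3p2:
  fixes p :: "real^'n \<Rightarrow> real" and q \<alpha> :: ennreal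
  assumes "var_exp p"
    and "1 \<le> q" and "1 \<le> \<alpha>"
    and "\<And>x. ennreal (p x) \<le> \<alpha>" and "\<alpha> \<le> q"
  shows "\<forall>r>0. \<exists>c C. 0 < c \<and> 0 < C \<and>
    (\<forall>f :: real^'n \<Rightarrow> real. f \<in> borel_measurable lebesgue \<longrightarrow>
      (let L = ennreal (r powr (real CARD('n) * einv \<alpha> - N_rp r p)) *
               lq_seq_norm q (\<lambda>k. lux_norm p (\<lambda>x. f x * indicator (cube r k) x));
           R = Lq_norm q (\<lambda>x. ennreal (r powr (real CARD('n) * einv \<alpha>
                    - real CARD('n) / p x - real CARD('n) * einv q))
                  * lux_norm p (\<lambda>y. f y * indicator (ball x r) y))
       in ennreal c * R \<le> L \<and> L \<le> ennreal C * R))"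
proof (intro allI impI)
  fix r :: real assume r: "0 < r"
  from assms(1) have pm: "p \<in> borel_measurable lebesgue" and p1: "\<And>x. 1 \<le> p x"
    by (auto simp: var_exp_def)
  define n :: real where "n = real CARD('n)"
  have n1: "1 \<le> n" by (simp add: n_def)
  define E0 where "E0 = n * einv \<alpha> - n * einv q"
  define w where "w x = r powr (n * einv \<alpha> - n / p x - n * einv q)" for x
  define w0 where "w0 = r powr E0 * min 1 (r powr (- n))"
  define w1 where "w1 = r powr E0 * max 1 (r powr (- n))"
  have wE: "w x = r powr (E0 - n / p x)" for x by (simp add: w_def E0_def algebra_simps)
  have up: "0 < n / p x" "n / p x \<le> n" for x
    using p1[of x] n1 by (auto simp: field_simps intro: order.trans[OF _ mult_right_mono[of 1 "p x" n]])
  have wb: "w0 \<le> w x" "w x \<le> w1" for x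
    unfolding wE w0_def w1_def using weight_bounds[OF r up[of x]] by auto
  have w0: "0 < w0" using r by (simp add: w0_def)
  have w1: "0 < w1" using r by (simp add: w1_def)
  have wnn: "0 \<le> w x" for x using wb(1)[of x] w0 by simp
  define K where "K = r powr (real CARD('n) * einv \<alpha> - N_rp r p)"
  have K: "0 < K" using r by (simp add: K_def)
  define D where "D = {d::int^'n. \<forall>i. d$i \<in> {-1..1}}"
  have Dfin: "finite D" unfolding D_def by (rule finite_intbox)
  have D0: "0 \<in> D" by (simp add: D_def)
  define M1 where "M1 = real (card D)"
  have M1: "0 < M1" using Dfin D0 by (auto simp: M1_def card_gt_0_iff)
  define m where "m = CARD('n) + 1"
  define s where "s = r / real m"
  have m: "0 < m" by (simp add: m_def)
  have s: "0 < s" using r by (simp add: s_def m_def)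
  have s': "s = r / (real CARD('n) + 1)" by (simp add: s_def m_def)
  define E where "E = {e::int^'n. \<forall>i. e$i \<in> {0..int m - 1}}"
  have Efin: "finite E" unfolding E_def by (rule finite_intbox)
  have E0in: "0 \<in> E" using m by (simp add: E_def)
  define M2 where "M2 = real (card E)"
  have M2: "0 < M2" using Efin E0in by (auto simp: M2_def card_gt_0_iff)
  define a where "a f k = lux_norm p (\<lambda>x. f x * indicator (cube r k) x)" for f :: "real^'n \<Rightarrow> real" and k
  define G where "G f x = lux_norm p (\<lambda>y. f y * indicator (ball x r) y)" for f :: "real^'n \<Rightarrow> real" and x
  have HA: "G f x \<le> ennreal M1 * Max ((\<lambda>d. a f (kap r x + d)) ` D)"
    if fm: "f \<in> borel_measurable lebesgue" for f x
  proof -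
    have "G f x \<le> ennreal (real (card D)) * Max ((\<lambda>d. a f (kap r x + d)) ` D)"
      unfolding G_def
    proof (rule lux_cover[OF pm p1 fm Dfin, where B="\<lambda>d. cube r (kap r x + d)"])
      show "D \<noteq> {}" using D0 by auto
      show "ball x r \<subseteq> (\<Union>d\<in>D. cube r (kap r x + d))" unfolding D_def by (rule ball_cover[OF r])
      fix d assume "d \<in> D"
      then show "lux_norm p (\<lambda>y. f y * indicator (cube r (kap r x + d)) y) \<le> Max ((\<lambda>d. a f (kap r x + d)) ` D)"
        using Dfin by (auto simp: a_def intro!: Max_ge)
    qed auto
    then show ?thesis by (simp add: M1_def)
  qed
  have HB: "\<exists>P. (\<forall>k. P k \<subseteq> cube r k \<and> P k \<in> sets lebesgue \<and> emeasure lebesgue (P k) = ennreal (s ^ CARD('n)))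
      \<and> (\<forall>k x. x \<in> P k \<longrightarrow> a f k \<le> ennreal M2 * G f x)"
    if fm: "f \<in> borel_measurable lebesgue" for f
  proof -
    define F where "F e k = lux_norm p (\<lambda>y. f y * indicator (cube s (fidx m k e)) y)" for e k
    have "\<forall>k. \<exists>e. e \<in> E \<and> (\<forall>e'\<in>E. F e' k \<le> F e k)"
    proof
      fix k
      have "Max ((\<lambda>e. F e k) ` E) \<in> (\<lambda>e. F e k) ` E" using Efin E0in by (intro Max_in) auto
      then obtain e where e: "e \<in> E" "Max ((\<lambda>e. F e k) ` E) = F e k" by auto
      then show "\<exists>e. e \<in> E \<and> (\<forall>e'\<in>E. F e' k \<le> F e k)" using Efin by (metis Max_ge finite_imageI image_eqI)
    qed
    then obtain es where es: "\<And>k. es k \<in> E" "\<And>k e'. e' \<in> E \<Longrightarrow> F e' k \<le> F (es k) k" by metis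
    define P where "P k = cube s (fidx m k (es k))" for k
    have Psub: "P k \<subseteq> cube r k" for k
      unfolding P_def s_def using fine_sub[OF r m] es(1)[of k] by (auto simp: E_def)
    have Ps: "P k \<in> sets lebesgue" for k by (simp add: P_def)
    have Pm: "emeasure lebesgue (P k) = ennreal (s ^ CARD('n))" for k
      unfolding P_def by (rule emeasure_cube[OF s])
    have ak: "a f k \<le> ennreal M2 * F (es k) k" for k
    proof -
      have "a f k \<le> ennreal (real (card E)) * F (es k) k"
        unfolding a_def
      proof (rule lux_cover[OF pm p1 fm Efin, where B="\<lambda>e. cube s (fidx m k e)"])
        show "E \<noteq> {}" using E0in by auto
        show "cube r k \<subseteq> (\<Union>e\<in>E. cube s (fidx m k e))" unfolding E_def s_def by (rule fine_cover[OF r m])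
        fix e assume "e \<in> E"
        then show "lux_norm p (\<lambda>y. f y * indicator (cube s (fidx m k e)) y) \<le> F (es k) k"
          using es(2) by (simp add: F_def)
      qed auto
      then show ?thesis by (simp add: M2_def)
    qed
    have FG: "F (es k) k \<le> G f x" if x: "x \<in> P k" for k x
    proof -
      have "F (es k) k \<le> ennreal (real (card {0::nat})) * G f x"
        unfolding F_def G_def
      proof (rule lux_cover[OF pm p1 fm, where I="{0::nat}" and B="\<lambda>_. ball x r"])
        show "cube s (fidx m k (es k)) \<subseteq> (\<Union>i\<in>{0::nat}. ball x r)"
        proof -
          have "x \<in> cube (r / (real CARD('n) + 1)) (fidx m k (es k))" using x by (simp only: P_def s')
          then have "cube (r / (real CARD('n) + 1)) (fidx m k (es k)) \<subseteq> ball x r" by (rule cube_in_ball[OF r])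
          then show ?thesis by (simp only: s') blast
        qed
      qed (auto simp: ball_sets)
      then show ?thesis by simp
    qed
    show ?thesis
    proof (intro exI conjI allI impI)
      fix k show "P k \<subseteq> cube r k" "P k \<in> sets lebesgue" "emeasure lebesgue (P k) = ennreal (s ^ CARD('n))"
        using Psub Ps Pm by auto
    next
      fix k x assume "x \<in> P k"
      then show "a f k \<le> ennreal M2 * G f x"
        using ak[of k] FG[of x k] by (meson mult_left_mono order.trans zero_le zero_less_iff_neq_zero)
    qed
  qed
  have bounds: "\<exists>c1 c2. 0 < c1 \<and> 0 < c2 \<and> (\<forall>f. f \<in> borel_measurable lebesgue \<longrightarrow>
      Lq_norm q (\<lambda>x. ennreal (w x) * G f x) \<le> ennreal c1 * lq_seq_norm q (a f) \<and>
      lq_seq_norm q (a f) \<le> ennreal c2 * Lq_norm q (\<lambda>x. ennreal (w x) * G f x))"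
  proof (cases "q = top")
    case True
    have pos: "0 < w1 * M1" "0 < M2 / w0" using w1 M1 M2 w0 by auto
    have "\<forall>f. f \<in> borel_measurable lebesgue \<longrightarrow>
      Lq_norm q (\<lambda>x. ennreal (w x) * G f x) \<le> ennreal (w1 * M1) * lq_seq_norm q (a f) \<and>
      lq_seq_norm q (a f) \<le> ennreal (M2 / w0) * Lq_norm q (\<lambda>x. ennreal (w x) * G f x)"
    proof (intro allI impI conjI)
      fix f :: "real^'n \<Rightarrow> real" assume fm: "f \<in> borel_measurable lebesgue"
      have Dne: "D \<noteq> {}" using D0 by auto
      have "Inf {z. AE x in lebesgue. ennreal (w x) * G f x \<le> z} \<le> ennreal (w1 * M1) * (SUP k. a f k)"
        by (rule dir1_inf[OF Dfin Dne wnn wb(2) w1 M1 HA[OF fm]])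
      then show "Lq_norm q (\<lambda>x. ennreal (w x) * G f x) \<le> ennreal (w1 * M1) * lq_seq_norm q (a f)"
        unfolding Lq_norm_def lq_seq_norm_def using True by simp
      obtain P where P: "\<And>k. P k \<subseteq> cube r k" "\<And>k. P k \<in> sets lebesgue" "\<And>k. emeasure lebesgue (P k) = ennreal (s ^ CARD('n))"
        "\<And>k x. x \<in> P k \<Longrightarrow> a f k \<le> ennreal M2 * G f x" using HB[OF fm] by metis
      have "(SUP k. a f k) \<le> ennreal (M2 / w0) * Inf {z. AE x in lebesgue. ennreal (w x) * G f x \<le> z}"
        by (rule dir2_inf[OF s P(2) P(3) P(4) M2 wb(1) w0])
      then show "lq_seq_norm q (a f) \<le> ennreal (M2 / w0) * Lq_norm q (\<lambda>x. ennreal (w x) * G f x)"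
        unfolding Lq_norm_def lq_seq_norm_def using True by simp
    qed
    then show ?thesis using pos by blast
  next
    case False
    define qq where "qq = enn2real q"
    have qeq: "q = ennreal qq" using False by (simp add: qq_def top.not_eq_extremum ennreal_enn2real)
    have qq: "1 \<le> qq" using assms(2) qeq by (simp add: ennreal_ge_1)
    define D1 where "D1 = (w1 * M1) powr qq * r ^ CARD('n) * card D"
    define D2 where "D2 = (M2 / w0) powr qq / s ^ CARD('n)"
    have D1: "0 < D1" using w1 M1 r unfolding D1_def M1_def[symmetric] by simp
    have D2: "0 < D2" using M2 w0 s by (simp add: D2_def)
    have pos: "0 < D1 powr (1 / qq)" "0 < D2 powr (1 / qq)" using D1 D2 by auto
    have "\<forall>f. f \<in> borel_measurable lebesgue \<longrightarrow>
      Lq_norm q (\<lambda>x. ennreal (w x) * G f x) \<le> ennreal (D1 powr (1 / qq)) * lq_seq_norm q (a f) \<and>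
      lq_seq_norm q (a f) \<le> ennreal (D2 powr (1 / qq)) * Lq_norm q (\<lambda>x. ennreal (w x) * G f x)"
    proof (intro allI impI conjI)
      fix f :: "real^'n \<Rightarrow> real" assume fm: "f \<in> borel_measurable lebesgue"
      define S where "S = (\<integral>\<^sup>+k. epow (a f k) qq \<partial>count_space UNIV)"
      define T where "T = (\<integral>\<^sup>+x. epow (ennreal (w x) * G f x) qq \<partial>lebesgue)"
      have TS: "T \<le> ennreal D1 * S"
        unfolding T_def S_def D1_def
        by (rule dir1_fin[OF r qq Dfin _ wnn wb(2) w1 M1 HA[OF fm]]) (use D0 in auto)
      obtain P where P: "\<And>k. P k \<subseteq> cube r k" "\<And>k. P k \<in> sets lebesgue" "\<And>k. emeasure lebesgue (P k) = ennreal (s ^ CARD('n))"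
        "\<And>k x. x \<in> P k \<Longrightarrow> a f k \<le> ennreal M2 * G f x" using HB[OF fm] by metis
      have ST: "S \<le> ennreal D2 * T"
        unfolding T_def S_def D2_def
        by (rule dir2_fin[OF r qq s P(1) P(2) P(3) P(4) M2 wb(1) w0])
      have L: "lq_seq_norm q (a f) = epow S (1 / qq)" using False by (simp add: lq_seq_norm_def S_def qq_def)
      have R: "Lq_norm q (\<lambda>x. ennreal (w x) * G f x) = epow T (1 / qq)" using False by (simp add: Lq_norm_def T_def qq_def)
      have "epow T (1 / qq) \<le> epow (ennreal D1 * S) (1 / qq)" using TS qq by (intro epow_mono) auto
      also have "\<dots> = ennreal (D1 powr (1 / qq)) * epow S (1 / qq)" by (rule epow_cmult[OF D1])
      finally show "Lq_norm q (\<lambda>x. ennreal (w x) * G f x) \<le> ennreal (D1 powr (1 / qq)) * lq_seq_norm q (a f)"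
        unfolding L R .
      have "epow S (1 / qq) \<le> epow (ennreal D2 * T) (1 / qq)" using ST qq by (intro epow_mono) auto
      also have "\<dots> = ennreal (D2 powr (1 / qq)) * epow T (1 / qq)" by (rule epow_cmult[OF D2])
      finally show "lq_seq_norm q (a f) \<le> ennreal (D2 powr (1 / qq)) * Lq_norm q (\<lambda>x. ennreal (w x) * G f x)"
        unfolding L R .
    qed
    then show ?thesis using pos by blast
  qed
  then obtain c1 c2 where c12: "0 < c1" "0 < c2" "\<And>f. f \<in> borel_measurable lebesgue \<Longrightarrow>
      Lq_norm q (\<lambda>x. ennreal (w x) * G f x) \<le> ennreal c1 * lq_seq_norm q (a f) \<and>
      lq_seq_norm q (a f) \<le> ennreal c2 * Lq_norm q (\<lambda>x. ennreal (w x) * G f x)" by blast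
  show "\<exists>c C. 0 < c \<and> 0 < C \<and>
    (\<forall>f :: real^'n \<Rightarrow> real. f \<in> borel_measurable lebesgue \<longrightarrow>
      (let L = ennreal (r powr (real CARD('n) * einv \<alpha> - N_rp r p)) *
               lq_seq_norm q (\<lambda>k. lux_norm p (\<lambda>x. f x * indicator (cube r k) x));
           R = Lq_norm q (\<lambda>x. ennreal (r powr (real CARD('n) * einv \<alpha>
                    - real CARD('n) / p x - real CARD('n) * einv q))
                  * lux_norm p (\<lambda>y. f y * indicator (ball x r) y))
       in ennreal c * R \<le> L \<and> L \<le> ennreal C * R))"
  proof (rule exI[of _ "K / c1"], rule exI[of _ "K * c2"], intro conjI allI impI)
    show "0 < K / c1" "0 < K * c2" using K c12 by auto
    fix f :: "real^'n \<Rightarrow> real" assume fm: "f \<in> borel_measurable lebesgue"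
    have eqL: "(\<lambda>k. lux_norm p (\<lambda>x. f x * indicator (cube r k) x)) = a f"
      by (simp add: a_def fun_eq_iff)
    have eqR: "(\<lambda>x. ennreal (r powr (real CARD('n) * einv \<alpha> - real CARD('n) / p x - real CARD('n) * einv q))
                  * lux_norm p (\<lambda>y. f y * indicator (ball x r) y)) = (\<lambda>x. ennreal (w x) * G f x)"
      by (simp add: w_def G_def n_def fun_eq_iff)
    show "let L = ennreal (r powr (real CARD('n) * einv \<alpha> - N_rp r p)) *
               lq_seq_norm q (\<lambda>k. lux_norm p (\<lambda>x. f x * indicator (cube r k) x));
           R = Lq_norm q (\<lambda>x. ennreal (r powr (real CARD('n) * einv \<alpha>
                    - real CARD('n) / p x - real CARD('n) * einv q))
                  * lux_norm p (\<lambda>y. f y * indicator (ball x r) y))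
       in ennreal (K / c1) * R \<le> L \<and> L \<le> ennreal (K * c2) * R"
      unfolding Let_def eqL eqR K_def[symmetric]
      using combine[OF K c12(1) c12(2)] c12(3)[OF fm] by blast
  qed
qed


end
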